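(* Let $A=(A^\bullet,d)$ be a connected, finite-dimensional commutative differential graded algebra over $\mathbb{C}$, let $\mathfrak{g}$ be a finite-dimensional complex Lie algebra, and let $\theta\colon \mathfrak{g}\to\mathfrak{gl}(V)$ be a finite-dimensional representation with $V\neq 0$. Fix a degree $i$. Suppose that $A$ has trivial resonance in degree $i$ (that is, $0$ is an isolated point of $\mathcal{R}^i_1(A)$) and that $\mathcal{F}(A,\mathfrak{g})_{(0)}=\mathcal{F}^1(A,\mathfrak{g})_{(0)}$. Then $\mathcal{R}^i_1(A,\theta)_{(0)}=\Pi(A,\theta)_{(0)}$.
   Context: A cdga $A=(A^\bullet,d)$ is a graded-commutative algebra with a degree-one differential that is a graded derivation with $d^2=0$; connected means $A^0=\mathbb{C}\cdot 1$. The variety of $\mathfrak{g}$-valued flat connections is $\mathcal{F}(A,\mathfrak{g})=\{\omega\in A^1\otimes\mathfrak{g} : d\omega+\tfrac12[\omega,\omega]=0\}$; for $\omega=\sum_k\eta_k\otimes g_k$ this equation reads $\sum_k d\eta_k\otimes g_k+\sum_{k<l}\eta_k\eta_l\otimes[g_k,g_l]=0$. For $\omega\in\mathcal{F}(A,\mathfrak{g})$, the covariant derivative $d_\omega$ on $A^\bullet\otimes V$ is $d_\omega(a\otimes v)=da\otimes v+\sum_k \eta_k a\otimes\theta(g_k)v$; it satisfies $d_\omega^2=0$. The resonance varieties are $\mathcal{R}^i_r(A,\theta)=\{\omega\in\mathcal{F}(A,\mathfrak{g}) : \dim H^i(A\otimes V,d_\omega)\ge r\}$. In the rank one case $\mathfrak{g}=\mathbb{C}$,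 $\theta=\mathrm{id}_{\mathbb{C}}$, one writes $\mathcal{R}^i_r(A)$; here $\mathcal{F}(A,\mathbb{C})=\{\eta\in A^1: d\eta=0\}=H^1(A)$. Further, $\mathcal{F}^1(A,\mathfrak{g})=\{\eta\otimes g : \eta\in A^1,\ d\eta=0,\ g\in\mathfrak{g}\}\subseteq\mathcal{F}(A,\mathfrak{g})$ and $\Pi(A,\theta)=\{\eta\otimes g : d\eta=0,\ g\in\mathfrak{g},\ \det\theta(g)=0\}$. For an affine variety $X$, $X_{(x)}$ denotes its analytic germ at $x$. *)

theory Defs
  imports "HOL-Analysis.Analysis"
begin

text \<open>A cdga over the complex numbers is encoded on a carrier type 'a (a finite-dimensional
real Euclidean space, which fixes the canonical topology) with a complex scalar multiplication
sc (compatible with the real one), a grading by subspaces Agr k (k a natural number),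
a product mul with unit one, and a differential d.  The carrier is the direct sum of the
Agr k.\<close>

definition cdga ::
  "(complex \<Rightarrow> 'a::euclidean_space \<Rightarrow> 'a) \<Rightarrow> (nat \<Rightarrow> 'a set) \<Rightarrow> ('a \<Rightarrow> 'a \<Rightarrow> 'a) \<Rightarrow> 'a \<Rightarrow> ('a \<Rightarrow> 'a) \<Rightarrow> bool"
where
  "cdga sc Agr mul one d \<longleftrightarrow>
     vector_space sc
   \<and> (\<forall>r x. sc (complex_of_real r) x = r *\<^sub>R x)
   \<and> (\<forall>k. module.subspace sc (Agr k))
   \<and> module.span sc (\<Union>k. Agr k) = UNIV
   \<and> (\<forall>N (x::nat \<Rightarrow> 'a). (\<forall>k\<le>N. x k \<in> Agr k) \<and> (\<Sum>k\<le>N. x k) = 0 \<longrightarrow> (\<forall>k\<le>N. x k = 0))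
   \<and> (\<forall>a. Vector_Spaces.linear sc sc (mul a))
   \<and> (\<forall>b. Vector_Spaces.linear sc sc (\<lambda>a. mul a b))
   \<and> (\<forall>a b c. mul (mul a b) c = mul a (mul b c))
   \<and> one \<in> Agr 0
   \<and> (\<forall>a. mul one a = a \<and> mul a one = a)
   \<and> (\<forall>p q a b. a \<in> Agr p \<longrightarrow> b \<in> Agr q \<longrightarrow> mul a b \<in> Agr (p + q))
   \<and> (\<forall>p q a b. a \<in> Agr p \<longrightarrow> b \<in> Agr q \<longrightarrow> mul a b = sc ((-1) ^ (p * q)) (mul b a))
   \<and> Vector_Spaces.linear sc sc d
   \<and> (\<forall>k a. a \<in> Agr k \<longrightarrow> d a \<in> Agr (Suc k))
   \<and> (\<forall>a. d (d a) = 0)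
   \<and> (\<forall>p a b. a \<in> Agr p \<longrightarrow> d (mul a b) = mul (d a) b + sc ((-1) ^ p) (mul a (d b)))"

definition connected_cdga ::
  "(complex \<Rightarrow> 'a::euclidean_space \<Rightarrow> 'a) \<Rightarrow> (nat \<Rightarrow> 'a set) \<Rightarrow> ('a \<Rightarrow> 'a \<Rightarrow> 'a) \<Rightarrow> 'a \<Rightarrow> ('a \<Rightarrow> 'a) \<Rightarrow> bool"
where
  "connected_cdga sc Agr mul one d \<longleftrightarrow>
     cdga sc Agr mul one d \<and> one \<noteq> 0 \<and> Agr 0 = module.span sc {one}"

text \<open>A finite-dimensional complex Lie algebra g is taken as complex^'m with a bracket;
a finite-dimensional representation V is complex^'n with theta : g \<rightarrow> gl(V) given by matrices.\<close>

definition lie_algebra :: "(complex^'m \<Rightarrow> complex^'m \<Rightarrow> complex^'m) \<Rightarrow> bool" where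
  "lie_algebra br \<longleftrightarrow>
     (\<forall>x y z. br (x + y) z = br x z + br y z)
   \<and> (\<forall>c x z. br (c *s x) z = c *s br x z)
   \<and> (\<forall>x y. br x y = - br y x)
   \<and> (\<forall>x y z. br x (br y z) + br y (br z x) + br z (br x y) = 0)"

definition lie_rep ::
  "(complex^'m \<Rightarrow> complex^'m \<Rightarrow> complex^'m) \<Rightarrow> (complex^'m \<Rightarrow> complex^'n^'n) \<Rightarrow> bool" where
  "lie_rep br \<theta> \<longleftrightarrow>
     (\<forall>x y. \<theta> (x + y) = \<theta> x + \<theta> y)
   \<and> (\<forall>c x. \<theta> (c *s x) = (\<chi> i j. c * (\<theta> x $ i $ j)))
   \<and> (\<forall>x y. \<theta> (br x y) = \<theta> x ** \<theta> y - \<theta> y ** \<theta> x)"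

text \<open>An element of A^1 \<otimes> g is a vector omega :: 'a^'m, meaning
  sum_k (omega$k) \<otimes> e_k, with e_k = axis k 1 the standard basis of g.
  An element of A \<otimes> V is a vector a :: 'a^'n, meaning sum_j (a$j) \<otimes> e_j.\<close>

definition flat_conn ::
  "(complex \<Rightarrow> 'a::euclidean_space \<Rightarrow> 'a) \<Rightarrow> (nat \<Rightarrow> 'a set) \<Rightarrow> ('a \<Rightarrow> 'a \<Rightarrow> 'a) \<Rightarrow> ('a \<Rightarrow> 'a)
   \<Rightarrow> (complex^'m \<Rightarrow> complex^'m \<Rightarrow> complex^'m) \<Rightarrow> ('a^'m) set" where
  "flat_conn sc Agr mul d br =
     {\<omega>. (\<forall>k. \<omega> $ k \<in> Agr 1) \<and>
          (\<forall>c. d (\<omega> $ c) + sc (1/2)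
               (\<Sum>k\<in>UNIV. \<Sum>l\<in>UNIV. sc (br (axis k 1) (axis l 1) $ c) (mul (\<omega> $ k) (\<omega> $ l))) = 0)}"

definition flat_conn1 ::
  "(complex \<Rightarrow> 'a::euclidean_space \<Rightarrow> 'a) \<Rightarrow> (nat \<Rightarrow> 'a set) \<Rightarrow> ('a \<Rightarrow> 'a) \<Rightarrow> ('a^'m::finite) set" where
  "flat_conn1 sc Agr d =
     {\<omega>. \<exists>\<eta> (g::complex^'m). \<eta> \<in> Agr 1 \<and> d \<eta> = 0 \<and> \<omega> = (\<chi> k. sc (g $ k) \<eta>)}"

definition Pi_set ::
  "(complex \<Rightarrow> 'a::euclidean_space \<Rightarrow> 'a) \<Rightarrow> (nat \<Rightarrow> 'a set) \<Rightarrow> ('a \<Rightarrow> 'a)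
   \<Rightarrow> (complex^'m \<Rightarrow> complex^'n^'n) \<Rightarrow> ('a^'m::finite) set" where
  "Pi_set sc Agr d \<theta> =
     {\<omega>. \<exists>\<eta> (g::complex^'m). \<eta> \<in> Agr 1 \<and> d \<eta> = 0 \<and> det (\<theta> g) = 0 \<and> \<omega> = (\<chi> k. sc (g $ k) \<eta>)}"

definition cov_deriv ::
  "(complex \<Rightarrow> 'a::euclidean_space \<Rightarrow> 'a) \<Rightarrow> ('a \<Rightarrow> 'a \<Rightarrow> 'a) \<Rightarrow> ('a \<Rightarrow> 'a)
   \<Rightarrow> (complex^'m \<Rightarrow> complex^'n^'n) \<Rightarrow> 'a^'m \<Rightarrow> 'a^'n \<Rightarrow> 'a^'n" where
  "cov_deriv sc mul d \<theta> \<omega> a =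
     (\<chi> j. d (a $ j) + (\<Sum>k\<in>UNIV. \<Sum>j'\<in>UNIV. sc (\<theta> (axis k 1) $ j $ j') (mul (\<omega> $ k) (a $ j'))))"

text \<open>Dimension of the i-th cohomology of a cochain complex given by graded pieces C i
  (subspaces of a vector space with scalar multiplication scv) and a differential D.
  Negative degrees are zero.\<close>
definition cohom_dim ::
  "(complex \<Rightarrow> 'v::ab_group_add \<Rightarrow> 'v) \<Rightarrow> (nat \<Rightarrow> 'v set) \<Rightarrow> ('v \<Rightarrow> 'v) \<Rightarrow> nat \<Rightarrow> nat" where
  "cohom_dim scv C D i =
     vector_space.dim scv {x \<in> C i. D x = 0}
     - vector_space.dim scv (if i = 0 then {0} else D ` C (i - 1))"

definition tensor_scale :: "(complex \<Rightarrow> 'a \<Rightarrow> 'a) \<Rightarrow> complex \<Rightarrow> 'a^'n \<Rightarrow> 'a^'n" where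
  "tensor_scale sc c x = (\<chi> j. sc c (x $ j))"

definition tensor_grading :: "(nat \<Rightarrow> 'a set) \<Rightarrow> nat \<Rightarrow> ('a^'n) set" where
  "tensor_grading Agr i = {x. \<forall>j. x $ j \<in> Agr i}"

definition resonance ::
  "(complex \<Rightarrow> 'a::euclidean_space \<Rightarrow> 'a) \<Rightarrow> (nat \<Rightarrow> 'a set) \<Rightarrow> ('a \<Rightarrow> 'a \<Rightarrow> 'a) \<Rightarrow> ('a \<Rightarrow> 'a)
   \<Rightarrow> (complex^'m \<Rightarrow> complex^'m \<Rightarrow> complex^'m) \<Rightarrow> (complex^'m \<Rightarrow> complex^'n^'n) \<Rightarrow> nat \<Rightarrow> nat \<Rightarrow> ('a^'m) set" where
  "resonance sc Agr mul d br \<theta> i r =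
     {\<omega> \<in> flat_conn sc Agr mul d br.
        r \<le> cohom_dim (tensor_scale sc) (tensor_grading Agr :: nat \<Rightarrow> ('a^'n) set) (cov_deriv sc mul d \<theta> \<omega>) i}"

text \<open>Rank one resonance R^i_r(A) (g = C, theta = id): d_eta a = d a + eta a on A.\<close>
definition resonance1 ::
  "(complex \<Rightarrow> 'a::euclidean_space \<Rightarrow> 'a) \<Rightarrow> (nat \<Rightarrow> 'a set) \<Rightarrow> ('a \<Rightarrow> 'a \<Rightarrow> 'a) \<Rightarrow> ('a \<Rightarrow> 'a)
   \<Rightarrow> nat \<Rightarrow> nat \<Rightarrow> 'a set" where
  "resonance1 sc Agr mul d i r =
     {\<eta>. \<eta> \<in> Agr 1 \<and> d \<eta> = 0 \<and> r \<le> cohom_dim sc Agr (\<lambda>a. d a + mul \<eta> a) i}"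

definition isolated_point_of :: "'x::topological_space \<Rightarrow> 'x set \<Rightarrow> bool" where
  "isolated_point_of x X \<longleftrightarrow> x \<in> X \<and> (\<exists>U. open U \<and> x \<in> U \<and> X \<inter> U \<subseteq> {x})"

definition germ_eq :: "'x::topological_space set \<Rightarrow> 'x set \<Rightarrow> 'x \<Rightarrow> bool" where
  "germ_eq X Y x \<longleftrightarrow> (\<exists>U. open U \<and> x \<in> U \<and> X \<inter> U = Y \<inter> U)"

end

theory Submission
  imports Defs "HOL-Computational_Algebra.Fundamental_Theorem_Algebra"
begin


definition msc :: "complex \<Rightarrow> complex^'n^'n \<Rightarrow> complex^'n^'n" where
  "msc c A = (\<chi> i j. c * A$i$j)"

primrec mpow :: "complex^'n^'n \<Rightarrow> nat \<Rightarrow> complex^'n^'n" where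
  "mpow M 0 = mat 1"
| "mpow M (Suc k) = M ** mpow M k"

definition mev :: "complex poly \<Rightarrow> complex^'n^'n \<Rightarrow> complex^'n^'n" where
  "mev p M = (\<Sum>k<Suc (degree p). msc (coeff p k) (mpow M k))"

primrec lprod :: "complex^'n^'n \<Rightarrow> (nat \<Rightarrow> complex) \<Rightarrow> nat \<Rightarrow> complex^'n^'n" where
  "lprod M r 0 = mat 1"
| "lprod M r (Suc n) = (M - mat (r n)) ** lprod M r n"

lemma msc_0[simp]: "msc 0 A = 0" by (simp add: msc_def vec_eq_iff)
lemma msc_add_l: "msc (a + b) A = msc a A + msc b A" by (simp add: msc_def vec_eq_iff algebra_simps)
lemma msc_add_r: "msc a (A + B) = msc a A + msc a B" by (simp add: msc_def vec_eq_iff algebra_simps)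
lemma msc_msc: "msc a (msc b A) = msc (a*b) A" by (simp add: msc_def vec_eq_iff algebra_simps)
lemma msc_1[simp]: "msc 1 A = A" by (simp add: msc_def vec_eq_iff)
lemma msc_mult_r: "A ** msc a B = msc a (A ** B)"
  by (simp add: msc_def vec_eq_iff matrix_matrix_mult_def sum_distrib_left algebra_simps)
lemma msc_mult_l: "msc a A ** B = msc a (A ** B)"
  by (simp add: msc_def vec_eq_iff matrix_matrix_mult_def sum_distrib_left algebra_simps)
lemma msc_mat: "msc a (mat 1) = mat a" by (simp add: msc_def vec_eq_iff mat_def)
lemma msc_sum_l: "msc (\<Sum>k\<in>S. f k) A = (\<Sum>k\<in>S. msc (f k) A)"
  by (induct S rule: infinite_finite_induct) (auto simp: msc_add_l)
lemma msc_sum_r: "msc a (\<Sum>k\<in>S. f k) = (\<Sum>k\<in>S. msc a (f k))"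
  by (induct S rule: infinite_finite_induct) (auto simp: msc_add_r msc_def vec_eq_iff distrib_left)
lemma msc_scaleR: "msc (complex_of_real r) A = r *\<^sub>R A"
  apply (simp add: msc_def vec_eq_iff)
  by (simp add: scaleR_conv_of_real)

lemma mat_mult_sum_r: "A ** (\<Sum>k\<in>S. f k) = (\<Sum>k\<in>S. A ** f k)"
  by (induct S rule: infinite_finite_induct) (auto simp: matrix_add_ldistrib)

lemma mev_bound:
  assumes "degree p < N"
  shows "mev p M = (\<Sum>k<N. msc (coeff p k) (mpow M k))"
  unfolding mev_def
  by (rule sum.mono_neutral_left) (use assms in \<open>auto simp: coeff_eq_0\<close>)

lemma mev_add: "mev (p + q) M = mev p M + mev q M"
proof -
  let ?N = "Suc (max (degree p) (degree q))"
  have "degree (p+q) < ?N" using degree_add_le_max[of p q] by auto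
  then show ?thesis
    by (simp add: mev_bound[of _ ?N] msc_add_l sum.distrib)
qed

lemma mev_smult: "mev (smult a p) M = msc a (mev p M)"
proof -
  have deg: "degree (smult a p) < Suc (degree p)" using degree_smult_le[of a p] by auto
  show ?thesis
    unfolding mev_bound[of _ "Suc (degree p)", OF deg]
    by (simp add: mev_def msc_msc msc_sum_r del: sum.lessThan_Suc)
qed

lemma mev_diff: "mev (p - q) M = mev p M - mev q M"
proof -
  let ?N = "Suc (max (degree p) (degree q))"
  have "degree (p-q) < ?N" using degree_diff_le_max[of p q] by auto
  then show ?thesis
    by (simp add: mev_bound[of _ ?N] msc_add_l sum_subtractf msc_def vec_eq_iff algebra_simps)
qed

lemma mev_monom: "mev (monom c k) M = msc c (mpow M k)"
proof -
  have deg: "degree (monom c k) < Suc k" by (simp add: degree_monom_le le_imp_less_Suc)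
  show ?thesis unfolding mev_bound[OF deg] by (simp add: coeff_monom)
qed

lemma mev_1: "mev 1 M = mat 1"
  by (simp add: mev_def msc_mat)

lemma mev_pCons0: "mev (pCons 0 p) M = M ** mev p M"
proof -
  have deg: "degree (pCons 0 p) < Suc (Suc (degree p))"
    by (metis degree_pCons_le le_imp_less_Suc)
  show ?thesis
    unfolding mev_bound[OF deg]
    apply (subst sum.lessThan_Suc_shift)
    by (simp add: mev_def msc_mult_r mat_mult_sum_r del: sum.lessThan_Suc)
qed

lemma mm_sub_r: "((A::complex^'n^'n) - B) ** C = A ** C - B ** C"
  by (simp add: matrix_matrix_mult_def vec_eq_iff left_diff_distrib sum_subtractf)
lemma mm_add_r: "((A::complex^'n^'n) + B) ** C = A ** C + B ** C"
  by (simp add: matrix_matrix_mult_def vec_eq_iff distrib_right sum.distrib)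
lemma mm_sub_l: "(C::complex^'n^'n) ** (A - B) = C ** A - C ** B"
  by (simp add: matrix_matrix_mult_def vec_eq_iff right_diff_distrib sum_subtractf)
lemma mat_mult_l: "mat a ** X = msc a X"
  by (simp add: matrix_matrix_mult_def vec_eq_iff mat_def msc_def if_distrib[of "\<lambda>x. x * _"] cong: if_cong)
lemma mat_mult_r: "X ** mat a = msc a X"
  by (simp add: matrix_matrix_mult_def vec_eq_iff mat_def msc_def if_distrib[of "\<lambda>x. _ * x"] mult.commute cong: if_cong)
lemma sub_mat_mult: "(M - mat a) ** X = M ** X - msc a X"
  by (simp add: mm_sub_r mat_mult_l)

lemma mev_lin: "mev ([:-a,1:] * q) M = (M - mat a) ** mev q M"
proof -
  have eq: "[:-a,1:] * q = pCons 0 q - smult a q"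
    by (simp add: mult_pCons_left)
  show ?thesis
    unfolding eq mev_diff mev_pCons0 mev_smult sub_mat_mult ..
qed

lemma mev_prod: "mev (\<Prod>i<n. [:- r i, 1:]) M = lprod M r n"
proof (induct n)
  case 0 then show ?case by (simp add: mev_1)
next
  case (Suc n)
  have "(\<Prod>i<Suc n. [:- r i, 1:]) = [:- r n, 1:] * (\<Prod>i<n. [:- r i, 1:])"
    by (simp add: mult.commute)
  then show ?case unfolding mev_lin Suc lprod.simps by (simp only: mev_lin Suc)
qed

lemma ann_poly: "\<exists>p. p \<noteq> 0 \<and> mev p (M::complex^'n^'n) = 0"
proof -
  define N where "N = DIM(complex^'n^'n)"
  show ?thesis
  proof (cases "inj_on (mpow M) {..N}")
    case False
    then obtain a b where ab: "a \<le> N" "b \<le> N" "a \<noteq> b" "mpow M a = mpow M b"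
      by (auto simp: inj_on_def)
    let ?p = "monom 1 a - monom (1::complex) b"
    have "coeff ?p a = 1" using ab by (simp add: coeff_monom)
    then have "?p \<noteq> 0" by (metis coeff_0 zero_neq_one)
    moreover have "mev ?p M = 0" by (simp add: mev_diff mev_monom ab)
    ultimately show ?thesis by blast
  next
    case True
    let ?S = "mpow M ` {..N}"
    have "card ?S = Suc N" using card_image[OF True] by simp
    then have "dependent ?S" by (intro dependent_biggerset) (auto simp: N_def)
    then obtain T u v where T: "finite T" "T \<subseteq> ?S" "v \<in> T" "u v \<noteq> 0"
      "(\<Sum>v\<in>T. u v *\<^sub>R v) = 0"
      unfolding dependent_explicit by blast
    define c where "c k = (if mpow M k \<in> T then complex_of_real (u (mpow M k)) else 0)" for k
    define p where "p = (\<Sum>k\<le>N. monom (c k) k)"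
    have coeffp: "coeff p k = (if k \<le> N then c k else 0)" for k
      by (simp add: p_def coeff_sum coeff_monom)
    have degp: "degree p < Suc N"
      using coeffp by (intro le_imp_less_Suc degree_le) auto
    have "mev p M = (\<Sum>k\<le>N. msc (c k) (mpow M k))"
      unfolding mev_bound[OF degp] lessThan_Suc_atMost by (intro sum.cong) (auto simp: coeffp)
    also have "\<dots> = (\<Sum>k\<in>{k\<in>{..N}. mpow M k \<in> T}. u (mpow M k) *\<^sub>R mpow M k)"
      by (rule sum.mono_neutral_cong_right) (auto simp: c_def msc_scaleR)
    also have "\<dots> = (\<Sum>v\<in>T. u v *\<^sub>R v)"
    proof -
      have "T = mpow M ` {k\<in>{..N}. mpow M k \<in> T}" using T(2) by auto
      moreover have "inj_on (mpow M) {k\<in>{..N}. mpow M k \<in> T}"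
        using True by (rule inj_on_subset) auto
      ultimately show ?thesis by (metis (no_types, lifting) sum.reindex_cong)
    qed
    also have "\<dots> = 0" by (rule T(5))
    finally have "mev p M = 0" .
    moreover have "p \<noteq> 0"
    proof -
      from T(2,3) obtain k where k: "k \<le> N" "v = mpow M k" by auto
      then have "coeff p k \<noteq> 0" using T(3,4) by (simp add: coeffp c_def)
      then show ?thesis by auto
    qed
    ultimately show ?thesis by blast
  qed
qed

lemma ann_lprod: "\<exists>r n. lprod (M::complex^'n^'n) r n = 0"
proof -
  obtain p where p: "p \<noteq> 0" "mev p M = 0" using ann_poly by blast
  obtain root where root: "smult (lead_coeff p) (\<Prod>i<degree p. [:-root i, 1:]) = p"
    using complex_poly_decompose' by blast
  have eq: "mev (smult (lead_coeff p) (\<Prod>i<degree p. [:-root i, 1:])) M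
      = msc (lead_coeff p) (lprod M root (degree p))"
    unfolding mev_smult mev_prod ..
  have "msc (lead_coeff p) (lprod M root (degree p)) = 0"
    using p(2) eq[unfolded root] by simp
  then have "lprod M root (degree p) = 0"
    using p(1) by (auto simp: msc_def vec_eq_iff)
  then show ?thesis by blast
qed




lemma lin_add: "Vector_Spaces.linear s1 s2 f \<Longrightarrow> f (x + y) = f x + f y"
  by (rule module_hom.add[OF module_hom_linearI])
lemma lin_scale: "Vector_Spaces.linear s1 s2 f \<Longrightarrow> f (s1 c x) = s2 c (f x)"
  by (rule module_hom.scale[OF module_hom_linearI])
lemma lin_zero: "Vector_Spaces.linear s1 s2 f \<Longrightarrow> f 0 = 0"
  by (rule module_hom.zero[OF module_hom_linearI])
lemma lin_diff: "Vector_Spaces.linear s1 s2 f \<Longrightarrow> f (x - y) = f x - f y"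
  by (rule module_hom.diff[OF module_hom_linearI])
lemma lin_neg: "Vector_Spaces.linear s1 s2 f \<Longrightarrow> f (- x) = - f x"
  by (rule module_hom.neg[OF module_hom_linearI])
lemma lin_sum: "Vector_Spaces.linear s1 s2 f \<Longrightarrow> f (sum g S) = (\<Sum>a\<in>S. f (g a))"
  by (rule module_hom.sum[OF module_hom_linearI])

definition tens :: "(complex \<Rightarrow> 'a \<Rightarrow> 'a) \<Rightarrow> 'a \<Rightarrow> complex^'n \<Rightarrow> 'a^'n" where
  "tens sc z u = (\<chi> l. sc (u$l) z)"
definition tact :: "(complex \<Rightarrow> 'a \<Rightarrow> 'a::ab_group_add) \<Rightarrow> complex^'n^'n \<Rightarrow> 'a^'n \<Rightarrow> 'a^'n" where
  "tact sc Q c = (\<chi> j. \<Sum>l\<in>UNIV. sc (Q$j$l) (c$l))"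
definition pif :: "(complex \<Rightarrow> 'a \<Rightarrow> 'a::ab_group_add) \<Rightarrow> complex^'n \<Rightarrow> 'a^'n \<Rightarrow> 'a" where
  "pif sc f c = (\<Sum>l\<in>UNIV. sc (f$l) (c$l))"
definition dotc :: "complex^'n \<Rightarrow> complex^'n \<Rightarrow> complex" where
  "dotc f u = (\<Sum>l\<in>UNIV. f$l * u$l)"
definition cmap :: "('a \<Rightarrow> 'a) \<Rightarrow> 'a^'n \<Rightarrow> 'a^'n" where
  "cmap s c = (\<chi> j. s (c$j))"

lemma dotc_vm: "dotc (w v* M) u = dotc w (M *v u)"
  by (simp add: dotc_def vector_matrix_mult_def matrix_vector_mult_def sum_distrib_left
      sum_distrib_right mult_ac) (rule sum.swap)

lemma dotc_0[simp]: "dotc 0 u = 0" by (simp add: dotc_def)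

lemma dotc_axis: "dotc (axis a c) u = c * u$a"
  by (simp add: dotc_def axis_def if_distrib[of "\<lambda>x. x * _"] cong: if_cong)

lemma ker_nonzero:
  fixes M :: "complex^'n^'n"
  assumes "det M = 0"
  obtains v where "v \<noteq> 0" "M *v v = 0"
proof -
  have lin: "Vector_Spaces.linear (*s) (*s) ((*v) M)" by simp
  have "\<not> inj ((*v) M)"
    using det_nz_iff_inj_gen[OF lin] assms by simp
  then obtain x y where "x \<noteq> y" "M *v x = M *v y" by (auto simp: inj_def)
  then have "x - y \<noteq> 0" "M *v (x - y) = 0" by (auto simp: matrix_vector_mult_diff_distrib)
  then show ?thesis using that by blast
qed

lemma nonzero_dotc:
  fixes v :: "complex^'n"
  assumes "v \<noteq> 0"
  obtains f where "dotc f v = 1"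
proof -
  obtain a where "v$a \<noteq> 0" using assms by (auto simp: vec_eq_iff)
  then have "dotc (axis a (1 / v$a)) v = 1" by (simp add: dotc_axis)
  then show ?thesis using that by blast
qed

lemma dotc_axis_r: "dotc u (axis a c) = u$a * c"
  by (simp add: dotc_def axis_def if_distrib[of "\<lambda>x. _ * x"] cong: if_cong)

lemma nonzero_dotc2:
  fixes w :: "complex^'n"
  assumes "w \<noteq> 0"
  obtains u where "dotc w u = 1"
proof -
  obtain a where "w$a \<noteq> 0" using assms by (auto simp: vec_eq_iff)
  then have "dotc w (axis a (1 / w$a)) = 1" by (simp add: dotc_axis_r)
  then show ?thesis using that by blast
qed

locale cdg =
  fixes sc :: "complex \<Rightarrow> 'a::euclidean_space \<Rightarrow> 'a" and Agr :: "nat \<Rightarrow> 'a set"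
    and mul :: "'a \<Rightarrow> 'a \<Rightarrow> 'a" and one :: 'a and d :: "'a \<Rightarrow> 'a"
  assumes cdga: "cdga sc Agr mul one d"
begin

lemma cdga_all1: "vector_space sc"
  using cdga unfolding cdga_def by (elim conjE) assumption
lemma cdga_all2: "\<forall>r x. sc (complex_of_real r) x = r *\<^sub>R x"
  using cdga unfolding cdga_def by (elim conjE) assumption
lemma cdga_all3: "\<forall>k. module.subspace sc (Agr k)"
  using cdga unfolding cdga_def by (elim conjE) assumption
lemma cdga_all4: "\<forall>a. Vector_Spaces.linear sc sc (mul a)"
  using cdga unfolding cdga_def by (elim conjE) assumption
lemma cdga_all5: "\<forall>b. Vector_Spaces.linear sc sc (\<lambda>a. mul a b)"
  using cdga unfolding cdga_def by (elim conjE) assumption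
lemma cdga_all6: "\<forall>a b c. mul (mul a b) c = mul a (mul b c)"
  using cdga unfolding cdga_def by (elim conjE) assumption
lemma cdga_all7: "\<forall>p q a b. a \<in> Agr p \<longrightarrow> b \<in> Agr q \<longrightarrow> mul a b \<in> Agr (p + q)"
  using cdga unfolding cdga_def by (elim conjE) assumption
lemma cdga_all8: "\<forall>p q a b. a \<in> Agr p \<longrightarrow> b \<in> Agr q \<longrightarrow> mul a b = sc ((-1) ^ (p * q)) (mul b a)"
  using cdga unfolding cdga_def by (elim conjE) assumption
lemma cdga_all9: "Vector_Spaces.linear sc sc d"
  using cdga unfolding cdga_def by (elim conjE) assumption
lemma cdga_all10: "\<forall>k a. a \<in> Agr k \<longrightarrow> d a \<in> Agr (Suc k)"
  using cdga unfolding cdga_def by (elim conjE) assumption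
lemma cdga_all11: "\<forall>a. d (d a) = 0"
  using cdga unfolding cdga_def by (elim conjE) assumption
lemma cdga_all12: "\<forall>p a b. a \<in> Agr p \<longrightarrow> d (mul a b) = mul (d a) b + sc ((-1) ^ p) (mul a (d b))"
  using cdga unfolding cdga_def by (elim conjE) assumption
lemmas cdga_all = cdga_all1 cdga_all2 cdga_all3 cdga_all4 cdga_all5 cdga_all6 cdga_all7 cdga_all8 cdga_all9 cdga_all10 cdga_all11 cdga_all12

sublocale vs: vector_space sc by (rule cdga_all(1))

lemma sc_real: "sc (complex_of_real r) x = r *\<^sub>R x" using cdga_all(2) by blast
lemma sub: "vs.subspace (Agr k)" using cdga_all(3) by blast
lemma lin_mul_l: "Vector_Spaces.linear sc sc (mul a)" using cdga_all(4) by blast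
lemma lin_mul_r: "Vector_Spaces.linear sc sc (\<lambda>a. mul a b)" using cdga_all(5) by blast
lemma mul_assoc: "mul (mul a b) c = mul a (mul b c)" using cdga_all(6) by blast
lemma mul_deg: "a \<in> Agr p \<Longrightarrow> b \<in> Agr q \<Longrightarrow> mul a b \<in> Agr (p + q)"
  using cdga_all(7) by blast
lemma gcomm: "a \<in> Agr p \<Longrightarrow> b \<in> Agr q \<Longrightarrow> mul a b = sc ((-1) ^ (p * q)) (mul b a)"
  using cdga_all(8) by blast
lemma lin_d: "Vector_Spaces.linear sc sc d" by (rule cdga_all(9))
lemma d_deg: "a \<in> Agr k \<Longrightarrow> d a \<in> Agr (Suc k)" using cdga_all(10) by blast
lemma dd[simp]: "d (d a) = 0" using cdga_all(11) by blast
lemma leib: "a \<in> Agr p \<Longrightarrow> d (mul a b) = mul (d a) b + sc ((-1) ^ p) (mul a (d b))"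
  using cdga_all(12) by blast

lemma sc_neg1: "sc (-1) x = - x"
  using sc_real[of "-1" x] by simp

lemma d_add: "d (x + y) = d x + d y" by (rule lin_add[OF lin_d])
lemma d_sc: "d (sc c x) = sc c (d x)" by (rule lin_scale[OF lin_d])
lemma d_0[simp]: "d 0 = 0" by (rule lin_zero[OF lin_d])
lemma d_diff: "d (x - y) = d x - d y" by (rule lin_diff[OF lin_d])
lemma d_sum: "d (sum g S) = (\<Sum>a\<in>S. d (g a))" by (rule lin_sum[OF lin_d])

lemma mul_add_r: "mul a (x + y) = mul a x + mul a y" by (rule lin_add[OF lin_mul_l])
lemma mul_sc_r: "mul a (sc c x) = sc c (mul a x)" by (rule lin_scale[OF lin_mul_l])
lemma mul_0_r[simp]: "mul a 0 = 0" by (rule lin_zero[OF lin_mul_l])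
lemma mul_diff_r: "mul a (x - y) = mul a x - mul a y" by (rule lin_diff[OF lin_mul_l])
lemma mul_sum_r: "mul a (sum g S) = (\<Sum>x\<in>S. mul a (g x))" by (rule lin_sum[OF lin_mul_l])
lemma mul_neg_r: "mul a (- x) = - mul a x" by (rule lin_neg[OF lin_mul_l])
lemma mul_add_l: "mul (x + y) b = mul x b + mul y b"
proof -
  have "(\<lambda>a. mul a b) (x + y) = (\<lambda>a. mul a b) x + (\<lambda>a. mul a b) y" by (rule lin_add[OF lin_mul_r])
  then show ?thesis by simp
qed
lemma mul_sc_l: "mul (sc c x) b = sc c (mul x b)"
proof -
  have "(\<lambda>a. mul a b) (sc c x) = sc c ((\<lambda>a. mul a b) x)" by (rule lin_scale[OF lin_mul_r])
  then show ?thesis by simp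
qed
lemma mul_0_l[simp]: "mul 0 b = 0"
proof -
  have "(\<lambda>a. mul a b) 0 = 0" by (rule lin_zero[OF lin_mul_r])
  then show ?thesis by simp
qed

lemma sub_0: "0 \<in> Agr k" using vs.subspace_0[OF sub] .
lemma sub_add: "x \<in> Agr k \<Longrightarrow> y \<in> Agr k \<Longrightarrow> x + y \<in> Agr k" using vs.subspace_add[OF sub] .
lemma sub_diff: "x \<in> Agr k \<Longrightarrow> y \<in> Agr k \<Longrightarrow> x - y \<in> Agr k" using vs.subspace_diff[OF sub] .
lemma sub_sc: "x \<in> Agr k \<Longrightarrow> sc c x \<in> Agr k" using vs.subspace_scale[OF sub] .
lemma sub_sum: "(\<And>x. x \<in> B \<Longrightarrow> f x \<in> Agr k) \<Longrightarrow> sum f B \<in> Agr k"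
  using vs.subspace_sum[OF sub] .

lemma mul_self_zero:
  assumes "e \<in> Agr 1" shows "mul e e = 0"
proof -
  have "mul e e = sc ((-1) ^ (1 * 1)) (mul e e)" using gcomm[OF assms assms] .
  then have "mul e e = - mul e e" by (simp add: sc_neg1)
  then show ?thesis by (metis add_cancel_right_right neg_eq_iff_add_eq_0 scaleR_2 scaleR_eq_0_iff zero_neq_numeral)
qed

lemma mul_mul_self:
  assumes "e \<in> Agr 1" shows "mul e (mul e x) = 0"
  using mul_assoc[of e e x] mul_self_zero[OF assms] by simp

lemma d_mul_closed:
  assumes "e \<in> Agr 1" "d e = 0" shows "d (mul e x) = - mul e (d x)"
  using leib[OF assms(1), of x] assms(2) by (simp add: sc_neg1)

text \<open>Twisted differentials on A\<close>

definition Dop :: "'a \<Rightarrow> 'a \<Rightarrow> 'a" where "Dop e a = d a + mul e a"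

lemma Dop_lin: "Vector_Spaces.linear sc sc (Dop e)"
  unfolding Vector_Spaces.linear_iff Dop_def
  by (simp add: vs.vector_space_axioms d_add mul_add_r d_sc mul_sc_r vs.scale_right_distrib)

lemma Dop_deg: "e \<in> Agr 1 \<Longrightarrow> a \<in> Agr k \<Longrightarrow> Dop e a \<in> Agr (Suc k)"
  unfolding Dop_def using d_deg mul_deg[of e 1 a k] sub_add by simp

lemma Dop_Dop: "e \<in> Agr 1 \<Longrightarrow> d e = 0 \<Longrightarrow> Dop e (Dop e a) = 0"
  unfolding Dop_def by (simp add: d_add mul_add_r d_mul_closed mul_mul_self)

lemma Dop_zero_eta: "Dop 0 = d" by (simp add: Dop_def fun_eq_iff)

section \<open>Tensor products with V\<close>

abbreviation "tsc \<equiv> tensor_scale sc"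
abbreviation "tg \<equiv> tensor_grading Agr"

lemma tens_add_l: "tens sc (x + y) u = tens sc x u + tens sc y u"
  by (simp add: tens_def vec_eq_iff vs.scale_right_distrib)
lemma tens_0_l[simp]: "tens sc 0 u = 0" by (simp add: tens_def vec_eq_iff)
lemma tens_0_r[simp]: "tens sc z 0 = 0" by (simp add: tens_def vec_eq_iff)
lemma tens_grade: "z \<in> Agr k \<Longrightarrow> tens sc z u \<in> tg k"
  by (simp add: tens_def tensor_grading_def sub_sc)

lemma tact_tens: "tact sc Q (tens sc z u) = tens sc z (Q *v u)"
  by (simp add: tact_def tens_def vec_eq_iff matrix_vector_mult_def vs.scale_scale vs.scale_sum_left)

lemma pif_tens: "pif sc f (tens sc z u) = sc (dotc f u) z"
  by (simp add: pif_def tens_def dotc_def vs.scale_scale vs.scale_sum_left)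

lemma tact_mult: "tact sc (Q ** R) c = tact sc Q (tact sc R c)"
proof -
  have "(\<Sum>l\<in>UNIV. sc (\<Sum>k\<in>UNIV. Q$j$k * R$k$l) (c$l))
      = (\<Sum>k\<in>UNIV. sc (Q$j$k) (\<Sum>l\<in>UNIV. sc (R$k$l) (c$l)))" for j
    by (simp add: vs.scale_sum_left vs.scale_sum_right vs.scale_scale) (rule sum.swap)
  then show ?thesis by (simp add: tact_def matrix_matrix_mult_def vec_eq_iff)
qed

lemma tact_id[simp]: "tact sc (mat 1) c = c"
  by (simp add: tact_def mat_def vec_eq_iff if_distrib[of "\<lambda>x. sc x _"] cong: if_cong)

lemma tact_zero_m[simp]: "tact sc 0 c = 0"
  by (simp add: tact_def vec_eq_iff)

lemma tact_add: "tact sc Q (a + b) = tact sc Q a + tact sc Q b"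
  by (simp add: tact_def vec_eq_iff vs.scale_right_distrib sum.distrib)
lemma tact_diff: "tact sc Q (a - b) = tact sc Q a - tact sc Q b"
  by (simp add: tact_def vec_eq_iff vs.scale_right_diff_distrib sum_subtractf)
lemma tact_zero[simp]: "tact sc Q 0 = 0"
  by (simp add: tact_def vec_eq_iff)

lemma tact_sub_mat: "tact sc (M - mat a) c = tact sc M c - tsc a c"
  by (simp add: tact_def tensor_scale_def mat_def vec_eq_iff vs.scale_left_diff_distrib
      sum_subtractf if_distrib[of "\<lambda>x. sc x _"] cong: if_cong)

lemma tact_grade: "c \<in> tg k \<Longrightarrow> tact sc Q c \<in> tg k"
  by (simp add: tact_def tensor_grading_def sub_sc sub_sum)

lemma pif_grade: "c \<in> tg k \<Longrightarrow> pif sc f c \<in> Agr k"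
  by (simp add: pif_def tensor_grading_def sub_sc sub_sum)

lemma pif_zero[simp]: "pif sc f 0 = 0" by (simp add: pif_def)
lemma pif_zero_f[simp]: "pif sc 0 c = 0" by (simp add: pif_def)
lemma pif_add: "pif sc f (a + b) = pif sc f a + pif sc f b"
  by (simp add: pif_def vs.scale_right_distrib sum.distrib)

lemma pif_tact: "pif sc f (tact sc Q c) = pif sc (f v* Q) c"
proof -
  have "(\<Sum>l\<in>UNIV. sc (f$l) (\<Sum>k\<in>UNIV. sc (Q$l$k) (c$k)))
      = (\<Sum>k\<in>UNIV. sc (\<Sum>l\<in>UNIV. Q$l$k * f$l) (c$k))"
    by (simp add: vs.scale_sum_left vs.scale_sum_right vs.scale_scale mult.commute) (rule sum.swap)
  then show ?thesis by (simp add: pif_def tact_def vector_matrix_mult_def mult.commute)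
qed

lemma tact_cmap:
  assumes "Vector_Spaces.linear sc sc s"
  shows "tact sc Q (cmap s c) = cmap s (tact sc Q c)"
  by (simp add: tact_def cmap_def vec_eq_iff lin_sum[OF assms] lin_scale[OF assms])

lemma pif_cmap:
  assumes "Vector_Spaces.linear sc sc s"
  shows "pif sc f (cmap s c) = s (pif sc f c)"
  by (simp add: pif_def cmap_def lin_sum[OF assms] lin_scale[OF assms])

lemma cmap_tens:
  assumes "Vector_Spaces.linear sc sc s"
  shows "cmap s (tens sc z u) = tens sc (s z) u"
  by (simp add: tens_def cmap_def vec_eq_iff lin_scale[OF assms])

lemma cmap_add:
  assumes "Vector_Spaces.linear sc sc s"
  shows "cmap s (a + b) = cmap s a + cmap s b"
  by (simp add: cmap_def vec_eq_iff lin_add[OF assms])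
lemma cmap_diff:
  assumes "Vector_Spaces.linear sc sc s"
  shows "cmap s (a - b) = cmap s a - cmap s b"
  by (simp add: cmap_def vec_eq_iff lin_diff[OF assms])
lemma cmap_zero:
  assumes "Vector_Spaces.linear sc sc s"
  shows "cmap s 0 = 0"
  by (simp add: cmap_def vec_eq_iff lin_zero[OF assms])

lemma tg_add: "x \<in> tg k \<Longrightarrow> y \<in> tg k \<Longrightarrow> x + y \<in> tg k"
  by (simp add: tensor_grading_def sub_add)
lemma tg_diff: "x \<in> tg k \<Longrightarrow> y \<in> tg k \<Longrightarrow> x - y \<in> tg k"
  by (simp add: tensor_grading_def sub_diff)
lemma tg_0: "0 \<in> tg k"
  by (simp add: tensor_grading_def sub_0)

end


context cdg
begin

lemma section_exists:
  assumes "Vector_Spaces.linear sc sc D" "vs.subspace S" "Z \<subseteq> D ` S"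
  obtains s where "Vector_Spaces.linear sc sc s" "range s \<subseteq> S" "\<And>z. z \<in> Z \<Longrightarrow> D (s z) = z"
proof -
  obtain B where B: "B \<subseteq> Z" "vs.independent B" "Z \<subseteq> vs.span B" "card B = vs.dim Z"
    by (rule vs.basis_exists)
  have "\<forall>b\<in>B. \<exists>x. x \<in> S \<and> D x = b" using B(1) assms(3) by fast
  from bchoice[OF this] obtain pre where pre: "\<forall>b\<in>B. pre b \<in> S \<and> D (pre b) = b" by (elim exE)
  interpret vp: vector_space_pair sc sc ..
  obtain g where g: "Vector_Spaces.linear sc sc g" "\<forall>x\<in>B. g x = pre x" "range g = vs.span (pre ` B)"
    using vp.linear_independent_extend_subspace[OF B(2)] by blast
  have "pre ` B \<subseteq> S" using pre by fast
  then have rg: "range g \<subseteq> S"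
    unfolding g(3) by (rule vs.span_minimal[OF _ assms(2)])
  have Dg: "D (g z) = z" if "z \<in> Z" for z
  proof -
    have "(D \<circ> g) z = id z"
    proof (rule vp.linear_eq_on[of "D \<circ> g" id])
      show "Vector_Spaces.linear sc sc (D \<circ> g)" by (rule Vector_Spaces.linear_compose[OF g(1) assms(1)])
      show "Vector_Spaces.linear sc sc id" by (rule vs.linear_id)
      show "z \<in> vs.span B" using that B(3) by blast
      show "(D \<circ> g) b = id b" if "b \<in> B" for b using that g(2) pre by force
    qed
    then show ?thesis by simp
  qed
  show thesis by (rule that[OF g(1) rg Dg])
qed

end

locale cdg_eta = cdg +
  fixes eta :: 'a
  assumes eta1: "eta \<in> Agr 1" and deta: "d eta = 0"
begin

definition DD :: "complex^'n^'n \<Rightarrow> 'a^'n \<Rightarrow> 'a^'n" where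
  "DD M c = cmap d c + cmap (mul eta) (tact sc M c)"

lemma DD_add: "DD M (a + b) = DD M a + DD M b"
  by (simp add: DD_def cmap_add[OF lin_d] cmap_add[OF lin_mul_l] tact_add)
lemma DD_diff: "DD M (a - b) = DD M a - DD M b"
  by (simp add: DD_def cmap_diff[OF lin_d] cmap_diff[OF lin_mul_l] tact_diff)
lemma DD_zero[simp]: "DD M 0 = 0"
  by (simp add: DD_def cmap_zero[OF lin_d] cmap_zero[OF lin_mul_l])

lemma DD_DD: "DD M (DD M c) = 0"
proof -
  have e1: "cmap d (cmap d x) = 0" for x by (simp add: cmap_def vec_eq_iff)
  have e2: "cmap d (cmap (mul eta) x) = - cmap (mul eta) (cmap d x)" for x
    by (simp add: cmap_def vec_eq_iff d_mul_closed[OF eta1 deta])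
  have e3: "cmap (mul eta) (cmap (mul eta) x) = 0" for x
    by (simp add: cmap_def vec_eq_iff mul_mul_self[OF eta1])
  show ?thesis
    unfolding DD_def
    by (simp add: cmap_add[OF lin_d] cmap_add[OF lin_mul_l] tact_add e1 e2 e3
        tact_cmap[OF lin_d] tact_cmap[OF lin_mul_l])
qed

lemma DD_grade: "c \<in> tg k \<Longrightarrow> DD M c \<in> tg (Suc k)"
proof -
  assume c: "c \<in> tg k"
  have "tact sc M c \<in> tg k" by (rule tact_grade[OF c])
  then show ?thesis
    using c d_deg mul_deg[OF eta1] sub_add
    by (simp add: DD_def cmap_def tensor_grading_def)
qed

lemma DD_tact:
  assumes "Q ** M = M ** Q"
  shows "DD M (tact sc Q c) = tact sc Q (DD M c)"
proof -
  have "tact sc M (tact sc Q c) = tact sc Q (tact sc M c)"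
    by (simp add: tact_mult[symmetric] assms)
  then show ?thesis
    by (simp add: DD_def tact_add tact_cmap[OF lin_d] tact_cmap[OF lin_mul_l])
qed

lemma pif_DD: "pif sc f (DD M c) = d (pif sc f c) + mul eta (pif sc (f v* M) c)"
  by (simp add: DD_def pif_add pif_cmap[OF lin_d] pif_cmap[OF lin_mul_l] pif_tact)

lemma DD_tens: "DD M (tens sc z u) = tens sc (d z) u + tens sc (mul eta z) (M *v u)"
  by (simp add: DD_def cmap_tens[OF lin_d] cmap_tens[OF lin_mul_l] tact_tens)

lemma DD_eig:
  assumes "tact sc (M - mat a) c = 0"
  shows "DD M c = cmap (Dop (sc a eta)) c"
proof -
  have "tact sc M c = tsc a c" using assms by (simp add: tact_sub_mat)
  then show ?thesis
    by (simp add: DD_def cmap_def Dop_def vec_eq_iff tensor_scale_def mul_sc_r mul_sc_l)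
qed

lemma eta_sc: "sc a eta \<in> Agr 1" "d (sc a eta) = 0"
  using sub_sc[OF eta1] d_sc deta by auto

end




lemma mat_vec_scalar: "mat a *v (v::complex^'n) = a *s v"
  by (simp add: mat_def matrix_vector_mult_def vec_eq_iff if_distrib[of "\<lambda>x. x * _"] cong: if_cong)

lemma lprod_comm: "lprod M r j ** M = M ** lprod M r j"
proof (induct j)
  case 0 then show ?case by simp
next
  case (Suc j)
  have c1: "(M - mat (r j)) ** M = M ** (M - mat (r j))"
    by (simp add: mm_sub_r mm_sub_l mat_mult_l mat_mult_r)
  have "lprod M r (Suc j) ** M = (M - mat (r j)) ** (lprod M r j ** M)"
    by (simp add: matrix_mul_assoc)
  also have "\<dots> = ((M - mat (r j)) ** M) ** lprod M r j" by (simp add: Suc matrix_mul_assoc)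
  also have "\<dots> = M ** lprod M r (Suc j)" by (simp add: c1 matrix_mul_assoc)
  finally show ?case .
qed

context cdg_eta
begin

lemma d1:
  fixes M :: "complex^'n^'n"
  assumes detM: "det M = 0" and z: "z \<in> Agr i" "d z = 0"
    and znot: "z \<notin> d ` (if i = 0 then {0} else Agr (i - 1))"
  shows "\<exists>y\<in>tg i. DD M y = 0 \<and> y \<notin> DD M ` (if i = 0 then {0} else tg (i - 1))"
proof -
  define P where "P = (if i = 0 then {0} else (tg (i - 1) :: ('a^'n) set))"
  define PA where "PA = (if i = 0 then {0} else Agr (i - 1))"
  have pifP: "pif sc f b \<in> PA" if "b \<in> P" for b f
  proof (cases "i = 0")
    case True
    then show ?thesis using that by (simp add: P_def PA_def)
  next
    case False
    then show ?thesis using that pif_grade[of b "i - 1" f] by (simp add: P_def PA_def)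
  qed
  obtain v where v: "v \<noteq> 0" "M *v v = 0" by (rule ker_nonzero[OF detM])
  have "det (transpose M) = 0" using detM by simp
  then obtain w where w: "w \<noteq> 0" "transpose M *v w = 0" by (rule ker_nonzero)
  have wM: "w v* M = 0" using w(2) by simp
  obtain f where f: "dotc f v = 1" by (rule nonzero_dotc[OF v(1)])
  obtain u where u: "dotc w u = 1" by (rule nonzero_dotc2[OF w(1)])
  have wMu: "dotc w (M *v u) = 0" using dotc_vm[of w M u] wM by simp
  show ?thesis
  proof (cases "tens sc z v \<in> DD M ` P")
    case False
    have "tens sc z v \<in> tg i" by (rule tens_grade[OF z(1)])
    moreover have "DD M (tens sc z v) = 0" by (simp add: DD_tens z(2) v(2))
    ultimately show ?thesis using False unfolding P_def by blast
  next
    case True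
    then obtain b where b: "b \<in> P" "tens sc z v = DD M b" by blast
    define b' where "b' = pif sc f b"
    define be where "be = pif sc (f v* M) b"
    have zeq: "z = d b' + mul eta be"
    proof -
      have "pif sc f (tens sc z v) = z" by (simp add: pif_tens f)
      then show ?thesis using b(2) by (simp add: pif_DD b'_def be_def)
    qed
    define y where "y = tens sc z u + tens sc (mul eta b') (M *v u)"
    have b'PA: "b' \<in> PA" using pifP[OF b(1)] by (simp add: b'_def)
    have eb': "mul eta b' \<in> Agr i"
    proof (cases "i = 0")
      case True
      then show ?thesis using b'PA by (simp add: PA_def sub_0)
    next
      case False
      then have "b' \<in> Agr (i - 1)" using b'PA by (simp add: PA_def)
      from mul_deg[OF eta1 this] False show ?thesis by simp
    qed
    have yg: "y \<in> tg i" unfolding y_def by (intro tg_add tens_grade z(1) eb')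
    have "DD M y = 0"
    proof -
      have "mul eta z + d (mul eta b') = 0"
        using zeq by (simp add: d_mul_closed[OF eta1 deta] mul_add_r mul_mul_self[OF eta1])
      then show ?thesis
        by (simp add: y_def DD_add DD_tens z(2) mul_mul_self[OF eta1] tens_add_l[symmetric])
    qed
    moreover have "y \<notin> DD M ` P"
    proof
      assume "y \<in> DD M ` P"
      then obtain q where q: "q \<in> P" "y = DD M q" by blast
      have "pif sc w y = z"
        by (simp add: y_def pif_add pif_tens u wMu)
      also have "pif sc w y = d (pif sc w q)"
        by (simp add: q(2) pif_DD wM)
      finally have "z \<in> d ` PA" using pifP[OF q(1)] by blast
      then show False using znot by (simp add: PA_def)
    qed
    ultimately show ?thesis using yg unfolding P_def by blast
  qed
qed

lemma d2:
  fixes M :: "complex^'n^'n"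
  assumes ann: "lprod M r n = 0"
    and eig: "\<And>a v. v \<noteq> 0 \<Longrightarrow> M *v v = a *s v \<Longrightarrow>
       {x \<in> Agr i. Dop (sc a eta) x = 0} \<subseteq> Dop (sc a eta) ` (if i = 0 then {0} else Agr (i - 1))"
  shows "{c \<in> tg i. DD M c = 0} \<subseteq> DD M ` (if i = 0 then {0} else tg (i - 1))"
proof -
  define P where "P = (if i = 0 then {0} else (tg (i - 1) :: ('a^'n) set))"
  have P0: "0 \<in> P" by (simp add: P_def tg_0)
  have main: "\<forall>c. c \<in> tg i \<longrightarrow> DD M c = 0 \<longrightarrow> tact sc (lprod M r j) c = 0 \<longrightarrow> c \<in> DD M ` P" for j
  proof (induct j)
    case 0
    show ?case
    proof (intro allI impI)
      fix c :: "'a^'n" assume "tact sc (lprod M r 0) c = 0"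
      then have "c = 0" by simp
      then show "c \<in> DD M ` P" using P0 by (metis DD_zero image_eqI)
    qed
  next
    case (Suc j)
    show ?case
    proof (intro allI impI)
      fix c assume c: "c \<in> tg i" "DD M c = 0" "tact sc (lprod M r (Suc j)) c = 0"
      define L where "L = lprod M r j"
      define a where "a = r j"
      define c' where "c' = tact sc L c"
      have c'g: "c' \<in> tg i" unfolding c'_def by (rule tact_grade[OF c(1)])
      have Lcomm: "L ** M = M ** L" unfolding L_def by (rule lprod_comm)
      have DDc': "DD M c' = 0" unfolding c'_def by (simp add: DD_tact[OF Lcomm] c(2))
      have ker: "tact sc (M - mat a) c' = 0"
        using c(3) by (simp add: c'_def L_def a_def tact_mult)
      have IH: "\<And>c. c \<in> tg i \<Longrightarrow> DD M c = 0 \<Longrightarrow> tact sc L c = 0 \<Longrightarrow> c \<in> DD M ` P"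
        using Suc by (simp add: L_def)
      show "c \<in> DD M ` P"
      proof (cases "det (M - mat a) = 0")
        case False
        then obtain R where R: "R ** (M - mat a) = mat 1"
          unfolding invertible_det_nz[symmetric] invertible_def by blast
        have "c' = tact sc (R ** (M - mat a)) c'" by (simp add: R)
        also have "\<dots> = 0" by (simp add: tact_mult ker)
        finally have "tact sc L c = 0" by (simp add: c'_def)
        then show ?thesis by (rule IH[OF c(1) c(2)])
      next
        case True
        obtain v where v: "v \<noteq> 0" "(M - mat a) *v v = 0" by (rule ker_nonzero[OF True])
        have "M *v v = a *s v"
          using v(2) by (simp add: matrix_vector_mult_diff_rdistrib mat_vec_scalar)
        note H = eig[OF v(1) this]
        have comp: "c' $ k \<in> {x \<in> Agr i. Dop (sc a eta) x = 0}" for k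
        proof -
          have "cmap (Dop (sc a eta)) c' = 0" using DDc' DD_eig[OF ker] by simp
          then have "Dop (sc a eta) (c'$k) = 0" by (simp add: cmap_def vec_eq_iff)
          moreover have "c'$k \<in> Agr i" using c'g by (simp add: tensor_grading_def)
          ultimately show ?thesis by simp
        qed
        show ?thesis
        proof (cases "i = 0")
          case True
          have "c' $ k = 0" for k
          proof -
            have "c' $ k \<in> Dop (sc a eta) ` (if i = 0 then {0} else Agr (i - 1))"
              by (rule subsetD[OF H comp[of k]])
            then have "c' $ k \<in> Dop (sc a eta) ` {0}" using True by simp
            then show ?thesis using lin_zero[OF Dop_lin] by simp
          qed
          then have "tact sc L c = 0" by (simp add: vec_eq_iff c'_def)
          then show ?thesis by (rule IH[OF c(1) c(2)])
        next
          case False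
          have Hs: "{x \<in> Agr i. Dop (sc a eta) x = 0} \<subseteq> Dop (sc a eta) ` Agr (i - 1)"
            using H False by simp
          obtain s where s: "Vector_Spaces.linear sc sc s" "range s \<subseteq> Agr (i - 1)"
            "\<And>z. z \<in> {x \<in> Agr i. Dop (sc a eta) x = 0} \<Longrightarrow> Dop (sc a eta) (s z) = z"
            by (rule section_exists[OF Dop_lin sub Hs]) blast
          define e0 where "e0 = cmap s c"
          have e0g: "e0 \<in> tg (i - 1)" using s(2) by (auto simp: e0_def cmap_def tensor_grading_def)
          have e: "tact sc L e0 = cmap s c'" by (simp add: e0_def c'_def tact_cmap[OF s(1)])
          have ker2: "tact sc (M - mat a) (cmap s c') = 0"
            by (simp add: tact_cmap[OF s(1)] ker cmap_zero[OF s(1)])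
          have DDe: "DD M (cmap s c') = c'"
            unfolding DD_eig[OF ker2] using s(3) comp by (simp add: cmap_def vec_eq_iff)
          define c'' where "c'' = c - DD M e0"
          have c''g: "c'' \<in> tg i"
            using DD_grade[OF e0g] False c(1) by (simp add: c''_def tg_diff)
          have c''D: "DD M c'' = 0" by (simp add: c''_def DD_diff c(2) DD_DD)
          have c''L: "tact sc L c'' = 0"
            by (simp add: c''_def tact_diff DD_tact[OF Lcomm, symmetric] e DDe c'_def[symmetric])
          obtain h where h: "h \<in> P" "c'' = DD M h" using IH[OF c''g c''D c''L] by blast
          have "c = DD M (e0 + h)" using h(2) unfolding DD_add c''_def by (simp add: algebra_simps)
          moreover have "e0 + h \<in> P" using h(1) e0g False by (simp add: P_def tg_add)
          ultimately show ?thesis by blast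
        qed
      qed
    qed
  qed
  show ?thesis
  proof
    fix c assume "c \<in> {c \<in> tg i. DD M c = 0}"
    then show "c \<in> DD M ` (if i = 0 then {0} else tg (i - 1))"
      using main[of n] ann unfolding P_def by simp
  qed
qed

end




lemma fd_exists:
  fixes s :: "complex \<Rightarrow> 'v::euclidean_space \<Rightarrow> 'v"
  assumes vs: "vector_space s" and re: "\<And>r x. s (complex_of_real r) x = r *\<^sub>R x"
  shows "\<exists>B. finite_dimensional_vector_space s B"
proof -
  interpret V: vector_space s by (rule vs)
  have sp: "x \<in> V.span Basis" for x
  proof -
    have "x = (\<Sum>b\<in>Basis. s (complex_of_real (inner x b)) b)"
      by (simp add: re euclidean_representation)
    also have "\<dots> \<in> V.span Basis"
      by (intro V.span_sum V.span_scale V.span_base)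
    finally show ?thesis .
  qed
  obtain B where B: "B \<subseteq> Basis" "V.independent B" "Basis \<subseteq> V.span B"
    by (rule V.maximal_independent_subset)
  have spB: "V.span B = UNIV"
  proof -
    have "V.span Basis \<subseteq> V.span B"
      using V.span_mono[OF B(3)] by (simp add: V.span_span)
    then show ?thesis using sp by auto
  qed
  have fin: "finite B" using B(1) finite_subset finite_Basis by blast
  have "finite_dimensional_vector_space s B"
    unfolding finite_dimensional_vector_space_def finite_dimensional_vector_space_axioms_def
    using vs fin B(2) spB by blast
  then show ?thesis by blast
qed

lemma cohom_zero_iff:
  fixes s :: "complex \<Rightarrow> 'v::ab_group_add \<Rightarrow> 'v"
  assumes fd: "finite_dimensional_vector_space s Bs"
    and subC: "\<And>k. module.subspace s (C k)"
    and lin: "Vector_Spaces.linear s s D"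
    and deg: "\<And>x. 0 < i \<Longrightarrow> x \<in> C (i - 1) \<Longrightarrow> D x \<in> C i"
    and DD: "\<And>x. 0 < i \<Longrightarrow> x \<in> C (i - 1) \<Longrightarrow> D (D x) = 0"
  shows "cohom_dim s C D i = 0 \<longleftrightarrow> {x \<in> C i. D x = 0} \<subseteq> (if i = 0 then {0} else D ` C (i - 1))"
proof -
  interpret F: finite_dimensional_vector_space s Bs by (rule fd)
  define Z where "Z = {x \<in> C i. D x = 0}"
  define B where "B = (if i = 0 then {0} else D ` C (i - 1))"
  have Bsub: "F.subspace B"
  proof (cases "i = 0")
    case True then show ?thesis by (simp add: B_def)
  next
    case False
    interpret L: Vector_Spaces.linear s s D by (rule lin)
    show ?thesis using False L.subspace_image[OF subC[of "i - 1"]] by (simp add: B_def)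
  qed
  have BZ: "B \<subseteq> Z"
  proof (cases "i = 0")
    case True
    then show ?thesis using F.subspace_0[OF subC[of 0]] lin_zero[OF lin] by (simp add: B_def Z_def)
  next
    case False
    then show ?thesis using deg DD by (auto simp: B_def Z_def)
  qed
  have cd: "cohom_dim s C D i = F.dim Z - F.dim B" by (simp add: cohom_dim_def Z_def B_def)
  show ?thesis
  proof
    assume "cohom_dim s C D i = 0"
    then have "F.dim Z \<le> F.dim B" using cd by simp
    then have "F.span B = F.span Z" by (rule F.dim_eq_span[OF BZ])
    then have "Z \<subseteq> B" using F.span_superset[of Z] Bsub F.span_eq_iff[of B] by auto
    then show "{x \<in> C i. D x = 0} \<subseteq> (if i = 0 then {0} else D ` C (i - 1))"
      by (simp add: Z_def B_def)
  next
    assume "{x \<in> C i. D x = 0} \<subseteq> (if i = 0 then {0} else D ` C (i - 1))"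
    then have "Z \<subseteq> B" by (simp add: Z_def B_def)
    then have "F.dim Z \<le> F.dim B" by (rule F.dim_subset)
    then show "cohom_dim s C D i = 0" using cd by simp
  qed
qed

lemma theta_expand:
  assumes "lie_rep br \<theta>"
  shows "\<theta> g $ j $ l = (\<Sum>k\<in>UNIV. g$k * \<theta> (axis k 1) $ j $ l)"
proof -
  have add: "\<theta> (x + y) = \<theta> x + \<theta> y" for x y using assms by (simp add: lie_rep_def)
  have scl: "\<theta> (c *s x) = (\<chi> i j. c * (\<theta> x $ i $ j))" for c x using assms by (simp add: lie_rep_def)
  have z: "\<theta> 0 = 0" using add[of 0 0] by simp
  have "\<theta> g = \<theta> (\<Sum>k\<in>UNIV. g$k *s axis k 1)" by (simp add: basis_expansion)
  also have "\<dots> = (\<Sum>k\<in>UNIV. \<theta> (g$k *s axis k 1))"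
    using sum_comp_morphism[of \<theta> "\<lambda>k. g$k *s axis k 1" UNIV, OF z add] by simp
  finally have "\<theta> g $ j $ l = (\<Sum>k\<in>UNIV. \<theta> (g$k *s axis k 1)) $ j $ l" by simp
  also have "\<dots> = (\<Sum>k\<in>UNIV. g$k * \<theta> (axis k 1) $ j $ l)"
    by (simp add: sum_component scl)
  finally show ?thesis .
qed

lemma theta_zero: "lie_rep br \<theta> \<Longrightarrow> \<theta> 0 = 0"
proof -
  assume "lie_rep br \<theta>"
  then have "\<forall>x y. \<theta> (x + y) = \<theta> x + \<theta> y" by (simp add: lie_rep_def)
  then have "\<theta> (0 + 0) = \<theta> 0 + \<theta> 0" by blast
  then show ?thesis by simp
qed

lemma det_zero_mat: "det (0::complex^'n^'n) = 0"
  using det_0 by (simp del: det_0)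

lemma img_if0: "f 0 = 0 \<Longrightarrow> f ` (if b then {0} else S) = (if b then {0} else f ` S)"
  by auto

lemma eig_bound:
  fixes M :: "complex^'n^'n"
  assumes "M *v v = a *s v" "v \<noteq> 0"
  shows "cmod a \<le> (\<Sum>j\<in>UNIV. \<Sum>l\<in>UNIV. cmod (M$j$l))"
proof -
  define m where "m = Max ((\<lambda>l. cmod (v$l)) ` UNIV)"
  have "m \<in> (\<lambda>l. cmod (v$l)) ` UNIV" unfolding m_def by (rule Max_in) auto
  then obtain j where j: "cmod (v$j) = m" by auto
  have le: "cmod (v$l) \<le> m" for l unfolding m_def by (rule Max_ge) auto
  have vj: "cmod (v$j) > 0"
  proof (rule ccontr)
    assume "\<not> cmod (v$j) > 0"
    then have "cmod (v$l) \<le> 0" for l using le j by (metis not_less order_trans)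
    then have "v = 0" by (simp add: vec_eq_iff)
    then show False using assms(2) by simp
  qed
  have "a * v$j = (\<Sum>l\<in>UNIV. M$j$l * v$l)"
    using assms(1) by (simp add: vec_eq_iff matrix_vector_mult_def)
  then have "cmod a * cmod (v$j) = cmod (\<Sum>l\<in>UNIV. M$j$l * v$l)" by (metis norm_mult)
  also have "\<dots> \<le> (\<Sum>l\<in>UNIV. cmod (M$j$l) * cmod (v$l))"
    by (rule order_trans[OF norm_sum]) (simp add: norm_mult)
  also have "\<dots> \<le> (\<Sum>l\<in>UNIV. cmod (M$j$l) * cmod (v$j))"
    by (rule sum_mono) (use le j in \<open>auto intro: mult_left_mono\<close>)
  also have "\<dots> = (\<Sum>l\<in>UNIV. cmod (M$j$l)) * cmod (v$j)" by (simp add: sum_distrib_right)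
  finally have "cmod a \<le> (\<Sum>l\<in>UNIV. cmod (M$j$l))" using vj by simp
  also have "\<dots> \<le> (\<Sum>j\<in>UNIV. \<Sum>l\<in>UNIV. cmod (M$j$l))"
    by (rule member_le_sum) (auto intro: sum_nonneg)
  finally show ?thesis .
qed

lemma det_nz_ker:
  fixes M :: "complex^'n^'n"
  assumes "det M \<noteq> 0" "M *v v = 0" shows "v = 0"
proof -
  have lin: "Vector_Spaces.linear (*s) (*s) ((*v) M)" by simp
  have "inj ((*v) M)" using det_nz_iff_inj_gen[OF lin] assms(1) by simp
  then show ?thesis using assms(2) by (metis injD matrix_vector_mult_0_right)
qed

context cdg
begin

lemma sc_norm_bound: "\<exists>K>0. \<forall>c x. norm (sc c x) \<le> K * cmod c * norm x"
proof -
  have lin: "linear (sc \<i>)"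
  proof (rule linearI)
    show "sc \<i> (x + y) = sc \<i> x + sc \<i> y" for x y by (rule vs.scale_right_distrib)
    show "sc \<i> (r *\<^sub>R x) = r *\<^sub>R sc \<i> x" for r x
      by (simp add: sc_real[symmetric] vs.scale_scale mult.commute)
  qed
  then have "bounded_linear (sc \<i>)" by (simp add: linear_conv_bounded_linear)
  then obtain K where K: "K > 0" "\<And>x. norm (sc \<i> x) \<le> norm x * K"
    using bounded_linear.pos_bounded by blast
  have "norm (sc c x) \<le> (1 + K) * cmod c * norm x" for c x
  proof -
    have P: "sc c x = sc (complex_of_real (Re c)) x + sc (complex_of_real (Im c)) (sc \<i> x)"
      by (subst complex_eq) (simp add: vs.scale_left_distrib vs.scale_scale mult.commute)
    have e1: "sc (complex_of_real (Im c)) (sc \<i> x) = Im c *\<^sub>R sc \<i> x" by (rule sc_real)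
    have e2: "sc (complex_of_real (Re c)) x = Re c *\<^sub>R x" by (rule sc_real)
    from P have "sc c x = Re c *\<^sub>R x + Im c *\<^sub>R (sc \<i> x)" unfolding e1 e2 .
    then have "norm (sc c x) \<le> \<bar>Re c\<bar> * norm x + \<bar>Im c\<bar> * (norm x * K)"
      by (metis K(2) abs_ge_zero mult_left_mono norm_scaleR norm_triangle_le add_mono order_refl)
    also have "\<dots> \<le> cmod c * norm x + cmod c * (norm x * K)"
      by (intro add_mono mult_right_mono abs_Re_le_cmod abs_Im_le_cmod) (use K in auto)
    also have "\<dots> = (1 + K) * cmod c * norm x" by (simp add: algebra_simps)
    finally show ?thesis .
  qed
  then show ?thesis using K(1) by (intro exI[of _ "1 + K"]) auto
qed

lemma tvs: "vector_space (tensor_scale sc :: complex \<Rightarrow> 'a^'n \<Rightarrow> 'a^'n)"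
  unfolding vector_space_def tensor_scale_def
  by (simp add: vec_eq_iff vs.scale_right_distrib vs.scale_left_distrib vs.scale_scale)

lemma tsc_real: "tensor_scale sc (complex_of_real r) x = r *\<^sub>R x"
  by (simp add: tensor_scale_def vec_eq_iff sc_real)

lemma tg_subspace: "module.subspace (tensor_scale sc) (tensor_grading Agr k :: ('a^'n) set)"
proof -
  interpret T: vector_space "tensor_scale sc :: complex \<Rightarrow> 'a^'n \<Rightarrow> 'a^'n" by (rule tvs)
  show ?thesis
    unfolding T.subspace_def
    by (auto simp: tensor_scale_def tensor_grading_def sub_sc sub_add sub_0)
qed

lemma Dop_eq: "(\<lambda>a. d a + mul e a) = Dop e" by (simp add: fun_eq_iff Dop_def)

lemma HA:
  assumes "e \<in> Agr 1" "d e = 0"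
  shows "cohom_dim sc Agr (\<lambda>a. d a + mul e a) i = 0 \<longleftrightarrow>
    {x \<in> Agr i. Dop e x = 0} \<subseteq> Dop e ` (if i = 0 then {0} else Agr (i - 1))"
proof -
  obtain Bs where fd: "finite_dimensional_vector_space sc Bs"
    using fd_exists[OF vs.vector_space_axioms sc_real] by blast
  have "cohom_dim sc Agr (Dop e) i = 0 \<longleftrightarrow>
    {x \<in> Agr i. Dop e x = 0} \<subseteq> (if i = 0 then {0} else Dop e ` Agr (i - 1))"
  proof (rule cohom_zero_iff[OF fd sub Dop_lin])
    show "Dop e x \<in> Agr i" if "0 < i" "x \<in> Agr (i - 1)" for x
      using Dop_deg[OF assms(1) that(2)] that(1) by simp
    show "Dop e (Dop e x) = 0" for x by (rule Dop_Dop[OF assms])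
  qed
  then show ?thesis
    unfolding Dop_eq img_if0[of "Dop e", OF lin_zero[OF Dop_lin]] .
qed

lemma flat:
  assumes "e \<in> Agr 1" "d e = 0"
  shows "(\<chi> k. sc (g$k) e) \<in> flat_conn sc Agr mul d br"
  using assms
  by (simp add: flat_conn_def sub_sc d_sc mul_sc_l mul_sc_r mul_self_zero)

end

context cdg_eta
begin

lemma DD_tsc: "DD M (tensor_scale sc c x) = tensor_scale sc c (DD M x)"
  by (simp add: DD_def cmap_def tact_def tensor_scale_def vec_eq_iff d_sc mul_sc_r mul_sum_r
      vs.scale_sum_right vs.scale_scale vs.scale_right_distrib mult.commute)

lemma DD_lin: "Vector_Spaces.linear (tensor_scale sc) (tensor_scale sc) (DD M)"
  unfolding Vector_Spaces.linear_iff using tvs DD_add DD_tsc by blast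

lemma HT:
  fixes M :: "complex^'n^'n"
  shows "cohom_dim (tensor_scale sc) (tensor_grading Agr) (DD M) i = 0 \<longleftrightarrow>
    {c \<in> tg i. DD M c = 0} \<subseteq> DD M ` (if i = 0 then {0} else tg (i - 1))"
proof -
  obtain Bs where fd: "finite_dimensional_vector_space (tensor_scale sc :: complex \<Rightarrow> 'a^'n \<Rightarrow> 'a^'n) Bs"
    using fd_exists[OF tvs tsc_real] by blast
  have "cohom_dim (tensor_scale sc) (tensor_grading Agr) (DD M) i = 0 \<longleftrightarrow>
    {c \<in> tg i. DD M c = 0} \<subseteq> (if i = 0 then {0} else DD M ` tg (i - 1))"
  proof (rule cohom_zero_iff[OF fd])
    show "Vector_Spaces.linear (tensor_scale sc) (tensor_scale sc) (DD M)" by (rule DD_lin)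
    show "module.subspace (tensor_scale sc) (tg k :: ('a^'n) set)" for k by (rule tg_subspace)
    show "DD M x \<in> tg i" if "0 < i" "x \<in> tg (i - 1)" for x
      using DD_grade[OF that(2)] that(1) by simp
    show "DD M (DD M x) = 0" for x by (rule DD_DD)
  qed
  then show ?thesis
    unfolding img_if0[of "DD M", OF DD_zero] .
qed

lemma cov_eq:
  fixes \<theta> :: "complex^'m \<Rightarrow> complex^'n^'n" and g :: "complex^'m"
  assumes th: "\<And>j l. \<theta> g $ j $ l = (\<Sum>k\<in>UNIV. g$k * \<theta> (axis k 1) $ j $ l)"
  shows "cov_deriv sc mul d \<theta> (\<chi> k. sc (g$k) eta) = DD (\<theta> g)"
proof (rule ext)
  fix a :: "'a^'n"
  have "mul eta (\<Sum>l\<in>UNIV. sc (\<theta> g $ j $ l) (a$l))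
      = (\<Sum>k\<in>UNIV. \<Sum>j'\<in>UNIV. sc (\<theta> (axis k 1) $ j $ j') (mul (sc (g$k) eta) (a$j')))" for j
  proof -
    have "mul eta (\<Sum>l\<in>UNIV. sc (\<theta> g $ j $ l) (a$l))
        = (\<Sum>l\<in>UNIV. \<Sum>k\<in>UNIV. sc (\<theta> (axis k 1) $ j $ l) (mul (sc (g$k) eta) (a$l)))"
      by (simp add: th mul_sum_r mul_sc_r mul_sc_l vs.scale_sum_left vs.scale_scale mult.commute)
    also have "\<dots> = (\<Sum>k\<in>UNIV. \<Sum>l\<in>UNIV. sc (\<theta> (axis k 1) $ j $ l) (mul (sc (g$k) eta) (a$l)))"
      by (rule sum.swap)
    finally show ?thesis .
  qed
  then show "cov_deriv sc mul d \<theta> (\<chi> k. sc (g$k) eta) a = DD (\<theta> g) a"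
    by (simp add: cov_deriv_def DD_def cmap_def tact_def vec_eq_iff)
qed

end




lemma comp_scale_bound:
  fixes sc :: "complex \<Rightarrow> 'a::euclidean_space \<Rightarrow> 'a"
  assumes vs: "vector_space sc" and K: "K > 0" "\<And>c x. norm (sc c x) \<le> K * cmod c * norm x"
  shows "cmod c * norm e \<le> K * norm (sc c e)"
proof (cases "c = 0")
  case True then show ?thesis using K by simp
next
  case False
  interpret V: vector_space sc by (rule vs)
  have "e = sc (1 / c) (sc c e)" using False by (simp add: V.scale_scale)
  then have "norm e \<le> K * cmod (1 / c) * norm (sc c e)" using K(2) by metis
  then have "cmod c * norm e \<le> cmod c * (K * cmod (1 / c) * norm (sc c e))"
    by (rule mult_left_mono) simp
  also have "\<dots> = K * norm (sc c e)" using False by (simp add: norm_divide field_simps)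
  finally show ?thesis .
qed

theorem corollary2p5:
  fixes sc :: "complex \<Rightarrow> 'a::euclidean_space \<Rightarrow> 'a"
    and Agr :: "nat \<Rightarrow> 'a set"
    and mul :: "'a \<Rightarrow> 'a \<Rightarrow> 'a" and one :: 'a and d :: "'a \<Rightarrow> 'a"
    and br :: "complex^'m \<Rightarrow> complex^'m \<Rightarrow> complex^'m"
    and \<theta> :: "complex^'m \<Rightarrow> complex^'n^'n"
    and i :: nat
  assumes "connected_cdga sc Agr mul one d"
    and "lie_algebra br"
    and "lie_rep br \<theta>"
    and "isolated_point_of 0 (resonance1 sc Agr mul d i 1)"
    and "germ_eq (flat_conn sc Agr mul d br) (flat_conn1 sc Agr d) 0"
  shows "germ_eq (resonance sc Agr mul d br \<theta> i 1) (Pi_set sc Agr d \<theta>) 0"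
proof -
  have cdgA: "cdg sc Agr mul one d" using assms(1) by (simp add: cdg_def connected_cdga_def)
  interpret C: cdg sc Agr mul one d by (rule cdgA)
  have th: "\<And>g j l. \<theta> g $ j $ l = (\<Sum>k\<in>UNIV. g$k * \<theta> (axis k 1) $ j $ l)"
    by (rule theta_expand[OF assms(3)])
  obtain UR where UR: "open UR" "0 \<in> UR" "resonance1 sc Agr mul d i 1 \<inter> UR \<subseteq> {0}"
    and R10: "0 \<in> resonance1 sc Agr mul d i 1"
    using assms(4) unfolding isolated_point_of_def by blast
  obtain eps where eps: "eps > 0" "ball 0 eps \<subseteq> UR" using UR(1,2) open_contains_ball by blast
  obtain UF where UF: "open UF" "0 \<in> UF"
      "flat_conn sc Agr mul d br \<inter> UF = flat_conn1 sc Agr d \<inter> UF"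
    using assms(5) unfolding germ_eq_def by blast
  obtain K where K: "K > 0" "\<And>c x. norm (sc c x) \<le> K * cmod c * norm x"
    using C.sc_norm_bound by blast
  define Ct where "Ct = (\<Sum>j\<in>UNIV. \<Sum>l\<in>UNIV. \<Sum>k\<in>UNIV. cmod (\<theta> (axis k 1) $ j $ l))"
  have Ct0: "Ct \<ge> 0" unfolding Ct_def by (intro sum_nonneg) auto
  define L where "L = K * K * Ct * real CARD('m)"
  have L0: "L \<ge> 0" unfolding L_def using K(1) Ct0 by simp
  define del where "del = eps / (L + 1)"
  have del0: "del > 0" unfolding del_def using eps(1) L0 by simp
  have Ldel: "L * del < eps"
  proof -
    have "L * del = eps * (L / (L + 1))" unfolding del_def by (simp add: field_simps)
    also have "\<dots> < eps * 1" using L0 eps(1) by (intro mult_strict_left_mono) auto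
    finally show ?thesis by simp
  qed
  define U where "U = UF \<inter> ball 0 del"
  have Uo: "open U" "0 \<in> U" using UF del0 by (auto simp: U_def)
  have est: "norm (sc a e) < eps"
    if e: "e \<in> Agr 1" and wU: "(\<chi> k. sc (g$k) e) \<in> U" and v: "\<theta> g *v v = a *s v" "v \<noteq> 0"
    for e g a v
  proof -
    define w where "w = (\<chi> k. sc (g$k) e)"
    define G where "G = (\<Sum>k\<in>UNIV. cmod (g$k))"
    have nw: "norm w < del" using wU by (simp add: U_def w_def)
    have "cmod a \<le> (\<Sum>j\<in>UNIV. \<Sum>l\<in>UNIV. cmod (\<theta> g $ j $ l))" by (rule eig_bound[OF v])
    also have "\<dots> \<le> (\<Sum>j\<in>UNIV. \<Sum>l\<in>UNIV. \<Sum>k\<in>UNIV. G * cmod (\<theta> (axis k 1) $ j $ l))"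
    proof (intro sum_mono)
      fix j l
      have "cmod (\<theta> g $ j $ l) \<le> (\<Sum>k\<in>UNIV. cmod (g$k * \<theta> (axis k 1) $ j $ l))"
        by (subst th) (rule norm_sum)
      also have "\<dots> \<le> (\<Sum>k\<in>UNIV. G * cmod (\<theta> (axis k 1) $ j $ l))"
      proof (intro sum_mono)
        fix k
        have "cmod (g$k) \<le> G" unfolding G_def by (rule member_le_sum) auto
        then show "cmod (g$k * \<theta> (axis k 1) $ j $ l) \<le> G * cmod (\<theta> (axis k 1) $ j $ l)"
          by (simp add: norm_mult mult_right_mono)
      qed
      finally show "cmod (\<theta> g $ j $ l) \<le> (\<Sum>k\<in>UNIV. G * cmod (\<theta> (axis k 1) $ j $ l))" .
    qed
    also have "\<dots> = G * Ct" by (simp add: Ct_def sum_distrib_left)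
    finally have ca: "cmod a \<le> G * Ct" .
    have Ge: "G * norm e \<le> K * real CARD('m) * norm w"
    proof -
      have "G * norm e = (\<Sum>k\<in>UNIV. cmod (g$k) * norm e)" by (simp add: G_def sum_distrib_right)
      also have "\<dots> \<le> (\<Sum>k\<in>(UNIV::'m set). K * norm w)"
      proof (intro sum_mono)
        fix k
        have "cmod (g$k) * norm e \<le> K * norm (sc (g$k) e)"
          by (rule comp_scale_bound[OF C.vs.vector_space_axioms K])
        also have "\<dots> \<le> K * norm w"
          using Finite_Cartesian_Product.norm_nth_le[of w k] K(1) by (simp add: w_def)
        finally show "cmod (g$k) * norm e \<le> K * norm w" .
      qed
      also have "\<dots> = K * real CARD('m) * norm w" by simp
      finally show ?thesis .
    qed
    have G0: "G \<ge> 0" unfolding G_def by (intro sum_nonneg) auto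
    have "norm (sc a e) \<le> K * cmod a * norm e" by (rule K(2))
    also have "\<dots> \<le> K * (G * Ct) * norm e"
      using ca K(1) by (intro mult_right_mono mult_left_mono) auto
    also have "\<dots> = K * Ct * (G * norm e)" by (simp add: algebra_simps)
    also have "\<dots> \<le> K * Ct * (K * real CARD('m) * norm w)"
      using Ge K(1) Ct0 by (intro mult_left_mono) auto
    also have "\<dots> = L * norm w" by (simp add: L_def algebra_simps)
    also have "\<dots> \<le> L * del" using nw L0 by (intro mult_left_mono) auto
    also have "\<dots> < eps" by (rule Ldel)
    finally show ?thesis .
  qed
  have resA: "\<not> {x \<in> Agr i. d x = 0} \<subseteq> d ` (if i = 0 then {0} else Agr (i - 1))"
  proof -
    have "1 \<le> cohom_dim sc Agr (\<lambda>a. d a + mul 0 a) i" using R10 unfolding resonance1_def by blast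
    then have ne: "\<not> cohom_dim sc Agr (\<lambda>a. d a + mul 0 a) i = 0" by linarith
    have H: "cohom_dim sc Agr (\<lambda>a. d a + mul 0 a) i = 0 \<longleftrightarrow>
        {x \<in> Agr i. d x = 0} \<subseteq> d ` (if i = 0 then {0} else Agr (i - 1))"
      using C.HA[OF C.sub_0 C.d_0] unfolding C.Dop_zero_eta .
    show ?thesis using ne unfolding H .
  qed
  show ?thesis unfolding germ_eq_def
  proof (intro exI[of _ U] conjI Uo)
    show "resonance sc Agr mul d br \<theta> i 1 \<inter> U = Pi_set sc Agr d \<theta> \<inter> U"
    proof (intro equalityI subsetI)
      fix w assume w: "w \<in> resonance sc Agr mul d br \<theta> i 1 \<inter> U"
      have wF: "w \<in> flat_conn sc Agr mul d br" using w by (simp add: resonance_def)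
      have "w \<in> flat_conn1 sc Agr d" using UF(3) wF w by (auto simp: U_def)
      then obtain e g where e: "e \<in> Agr 1" "d e = 0" and weq: "w = (\<chi> k. sc (g$k) e)"
        unfolding flat_conn1_def by blast
      have coh: "1 \<le> cohom_dim (tensor_scale sc) (tensor_grading Agr :: nat \<Rightarrow> ('a^'n) set)
          (cov_deriv sc mul d \<theta> w) i"
        using w by (simp add: resonance_def)
      have wU: "w \<in> U" using w by simp
      show "w \<in> Pi_set sc Agr d \<theta> \<inter> U"
      proof (cases "det (\<theta> g) = 0")
        case True
        then show ?thesis using e weq wU unfolding Pi_set_def by blast
      next
        case False
        show ?thesis
        proof (cases "e = 0")
          case True
          then have w0: "w = 0" using weq by (simp add: vec_eq_iff)
          have "(0::'a^'m) = (\<chi> k. sc ((0::complex^'m)$k) 0)" by (simp add: vec_eq_iff)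
          moreover have "det (\<theta> 0) = 0" using theta_zero[OF assms(3)] det_zero_mat by simp
          ultimately have "0 \<in> Pi_set sc Agr d \<theta>"
            unfolding Pi_set_def using C.sub_0 C.d_0 by blast
          then show ?thesis using w0 wU by simp
        next
          case False
          interpret E: cdg_eta sc Agr mul one d e
            by (intro cdg_eta.intro cdgA cdg_eta_axioms.intro e)
          have cov: "cov_deriv sc mul d \<theta> w = E.DD (\<theta> g)" unfolding weq by (rule E.cov_eq[OF th])
          obtain r n where ann: "lprod (\<theta> g) r n = 0" using ann_lprod by blast
          have "{c \<in> tensor_grading Agr i. E.DD (\<theta> g) c = 0}
              \<subseteq> E.DD (\<theta> g) ` (if i = 0 then {0} else tensor_grading Agr (i - 1))"
          proof (rule E.d2[OF ann])
            fix a v assume v: "v \<noteq> 0" "\<theta> g *v v = a *s v"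
            have a0: "a \<noteq> 0"
            proof
              assume "a = 0"
              then have "\<theta> g *v v = 0" using v(2) by simp
              then have "v = 0" by (rule det_nz_ker[OF \<open>det (\<theta> g) \<noteq> 0\<close>])
              then show False using v(1) by simp
            qed
            have e1: "sc a e \<in> Agr 1" "d (sc a e) = 0" by (rule E.eta_sc(1), rule E.eta_sc(2))
            have e0: "sc a e \<noteq> 0"
            proof
              assume h: "sc a e = 0"
              have "e = sc (1 / a) (sc a e)" using a0 by (simp add: C.vs.scale_scale)
              then have "e = 0" unfolding h by simp
              then show False using \<open>e \<noteq> 0\<close> by simp
            qed
            have "norm (sc a e) < eps" using est[OF e(1) _ v(2) v(1)] wU weq by simp
            then have "sc a e \<in> UR" using eps(2) by (auto simp: dist_norm)
            then have "sc a e \<notin> resonance1 sc Agr mul d i 1" using UR(3) e0 by blast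
            then have "\<not> 1 \<le> cohom_dim sc Agr (\<lambda>x. d x + mul (sc a e) x) i"
              using e1 by (simp add: resonance1_def)
            then have "cohom_dim sc Agr (\<lambda>x. d x + mul (sc a e) x) i = 0" by simp
            then show "{x \<in> Agr i. C.Dop (sc a e) x = 0}
                \<subseteq> C.Dop (sc a e) ` (if i = 0 then {0} else Agr (i - 1))"
              using C.HA[OF e1] by simp
          qed
          then have "cohom_dim (tensor_scale sc) (tensor_grading Agr :: nat \<Rightarrow> ('a^'n) set)
              (E.DD (\<theta> g)) i = 0"
            by (rule iffD2[OF E.HT])
          then show ?thesis using coh cov by simp
        qed
      qed
    next
      fix w assume w: "w \<in> Pi_set sc Agr d \<theta> \<inter> U"
      then obtain e g where e: "e \<in> Agr 1" "d e = 0" and detg: "det (\<theta> g) = 0"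
        and weq: "w = (\<chi> k. sc (g$k) e)"
        unfolding Pi_set_def by blast
      interpret E: cdg_eta sc Agr mul one d e
        by (intro cdg_eta.intro cdgA cdg_eta_axioms.intro e)
      have wF: "w \<in> flat_conn sc Agr mul d br" unfolding weq by (rule C.flat[OF e])
      have cov: "cov_deriv sc mul d \<theta> w = E.DD (\<theta> g)" unfolding weq by (rule E.cov_eq[OF th])
      obtain z where z: "z \<in> Agr i" "d z = 0" "z \<notin> d ` (if i = 0 then {0} else Agr (i - 1))"
        using resA by blast
      obtain y where y: "y \<in> tensor_grading Agr i" "E.DD (\<theta> g) y = 0"
        "y \<notin> E.DD (\<theta> g) ` (if i = 0 then {0} else tensor_grading Agr (i - 1))"
        using E.d1[OF detg z] by blast
      have "\<not> {c \<in> tensor_grading Agr i. E.DD (\<theta> g) c = 0}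
          \<subseteq> E.DD (\<theta> g) ` (if i = 0 then {0} else tensor_grading Agr (i - 1))"
        using y by blast
      then have "cohom_dim (tensor_scale sc) (tensor_grading Agr :: nat \<Rightarrow> ('a^'n) set)
          (E.DD (\<theta> g)) i \<noteq> 0"
        by (rule contrapos_nn[OF _ iffD1[OF E.HT]])
      then have "w \<in> resonance sc Agr mul d br \<theta> i 1"
        using wF cov by (simp add: resonance_def)
      then show "w \<in> resonance sc Agr mul d br \<theta> i 1 \<inter> U" using w by simp
    qed
  qed
qed


end
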